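(* There exist constants $\delta_1>0$ and $D_3<\infty$ such that for all $u\in\mathbb U$ and all $t\ge0$, $$\|x(t,u)-\pi\|_2\le D_3e^{-\delta_1t}\|u-\pi\|_2 .$$
   Context: Fix integers $C\ge1$, $d\ge1$ and a real $\sigma>0$. Let $\mathbb U=\{u\in\mathbb R^{C+1}:1=u_0\ge u_1\ge\cdots\ge u_C\ge0\}$ with Euclidean norm $\|\cdot\|_2$. For $u\in\mathbb U$, $x(t,u)$ is the unique solution of $x(0,u)=u$, $\frac d{dt}x_0=0$, $\frac{d}{dt}x_n=\sigma(x_{n-1}^d-x_n^d)-n(x_n-x_{n+1})$ for $1\le n\le C$, with $x_{C+1}\equiv0$. $\pi\in\mathbb U$ is the unique fixed point of this ODE in $\mathbb U$: $\pi_0=1$ and $\sigma(\pi_{n-1}^d-\pi_n^d)=n(\pi_n-\pi_{n+1})$ for $1\le n\le C$, with $\pi_{C+1}=0$. *)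

theory Defs
  imports "HOL-Analysis.Analysis"
begin

text \<open>Vectors in R^(C+1) are represented as functions nat => real; only indices 0..C matter.\<close>

definition inU :: "nat \<Rightarrow> (nat \<Rightarrow> real) \<Rightarrow> bool" where
  "inU C u \<longleftrightarrow> u 0 = 1 \<and> (\<forall>n<C. u (Suc n) \<le> u n) \<and> u C \<ge> 0"

definition comp :: "nat \<Rightarrow> (nat \<Rightarrow> real) \<Rightarrow> nat \<Rightarrow> real" where
  "comp C y n = (if n \<le> C then y n else 0)"

definition drift :: "nat \<Rightarrow> nat \<Rightarrow> real \<Rightarrow> (nat \<Rightarrow> real) \<Rightarrow> nat \<Rightarrow> real" where
  "drift C d \<sigma> y n =
     (if n = 0 then 0
      else \<sigma> * (comp C y (n - 1) ^ d - comp C y n ^ d)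
           - real n * (comp C y n - comp C y (n + 1)))"

definition is_solution :: "nat \<Rightarrow> nat \<Rightarrow> real \<Rightarrow> (nat \<Rightarrow> real) \<Rightarrow> (real \<Rightarrow> nat \<Rightarrow> real) \<Rightarrow> bool" where
  "is_solution C d \<sigma> u X \<longleftrightarrow>
     (\<forall>n\<le>C. X 0 n = u n) \<and>
     (\<forall>n\<le>C. \<forall>t\<ge>0. ((\<lambda>s. X s n) has_real_derivative drift C d \<sigma> (X t) n) (at t within {0..}))"

definition is_fixed_point :: "nat \<Rightarrow> nat \<Rightarrow> real \<Rightarrow> (nat \<Rightarrow> real) \<Rightarrow> bool" where
  "is_fixed_point C d \<sigma> p \<longleftrightarrow> inU C p \<and>
     (\<forall>n. 1 \<le> n \<and> n \<le> C \<longrightarrow>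
        \<sigma> * (comp C p (n - 1) ^ d - comp C p n ^ d) = real n * (comp C p n - comp C p (n + 1)))"

definition dist2 :: "nat \<Rightarrow> (nat \<Rightarrow> real) \<Rightarrow> (nat \<Rightarrow> real) \<Rightarrow> real" where
  "dist2 C a b = sqrt (\<Sum>n\<le>C. (a n - b n)^2)"

end

theory Submission
  imports Defs
begin

lemma nonincr_0T:
  fixes F F' :: "real \<Rightarrow> real"
  assumes der: "\<And>s. s \<ge> 0 \<Longrightarrow> (F has_real_derivative F' s) (at s within {0..})"
    and np: "\<And>s. 0 \<le> s \<Longrightarrow> s \<le> T \<Longrightarrow> F' s \<le> 0" and T: "T \<ge> 0"
  shows "F T \<le> F 0"
proof (rule DERIV_nonpos_imp_decreasing_open[OF T])
  fix x assume x: "0 < x" "x < T"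
  have "x \<in> interior {0::real..}" using x by simp
  then have "at x within {0..} = at x" by (rule at_within_interior)
  then have "DERIV F x :> F' x" using der[of x] x by simp
  then show "\<exists>y. DERIV F x :> y \<and> y \<le> 0" using np[of x] x by auto
next
  have "continuous_on {0..} F"
    unfolding continuous_on_eq_continuous_within
    using der has_field_derivative_imp_has_derivative has_derivative_continuous by fastforce
  then show "continuous_on {0..T} F" by (rule continuous_on_subset) auto
qed

lemma DERIV_minsq0: "((\<lambda>y::real. (min y 0)^2) has_real_derivative 2 * min 0 0) (at 0)"
proof -
  have "((\<lambda>y::real. ((min y 0)^2 - (min 0 0)^2) / (y - 0)) \<longlongrightarrow> 0) (at 0)"
    proof (rule Lim_null_comparison[where g="\<lambda>y. \<bar>y\<bar>"])
      show "\<forall>\<^sub>F y in at 0. norm (((min y 0)^2 - (min 0 0)^2) / (y - 0)) \<le> \<bar>y::real\<bar>"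
      proof (intro always_eventually allI)
        fix y :: real
        have "\<bar>(min y 0)^2\<bar> \<le> \<bar>y\<bar> * \<bar>y\<bar>"
          by (simp add: power2_eq_square abs_mult min_def)
        then show "norm (((min y 0)^2 - (min 0 0)^2) / (y - 0)) \<le> \<bar>y\<bar>"
          by (cases "y = 0") (simp_all add: abs_divide divide_le_eq)
      qed
      have "((\<lambda>y::real. \<bar>y\<bar>) \<longlongrightarrow> \<bar>0\<bar>) (at 0)"
        by (intro tendsto_intros)
      then show "((\<lambda>y::real. \<bar>y\<bar>) \<longlongrightarrow> 0) (at 0)" by simp
    qed
  then show ?thesis by (simp add: has_field_derivative_iff)
qed

lemma DERIV_minsq: "((\<lambda>y::real. (min y 0)^2) has_real_derivative 2 * min x 0) (at x)"
proof -
  consider "x < 0" | "x > 0" | "x = 0" by linarith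
  then show ?thesis
  proof cases
    case 1
    have "((\<lambda>y::real. y^2) has_real_derivative 2 * min x 0) (at x)"
      using 1 by (auto intro!: derivative_eq_intros)
    then show ?thesis
      by (rule has_field_derivative_transform_within_open[where S="{..<0}"]) (use 1 in auto)
  next
    case 2
    have "((\<lambda>y::real. 0) has_real_derivative 2 * min x 0) (at x)"
      using 2 by (auto intro!: derivative_eq_intros)
    then show ?thesis
      by (rule has_field_derivative_transform_within_open[where S="{0<..}"]) (use 2 in auto)
  next
    case 3
    then show ?thesis using DERIV_minsq0 by simp
  qed
qed



lemma pow_abs_bound:
  fixes a B :: real
  assumes "\<bar>a\<bar> \<le> B" "d \<ge> 1"
  shows "\<bar>a ^ d\<bar> \<le> B ^ (d - 1) * \<bar>a\<bar>"
proof -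
  have "a ^ d = a * a ^ (d - 1)" using assms(2) by (cases d) auto
  moreover have "\<bar>a\<bar> ^ (d - 1) \<le> B ^ (d - 1)" by (rule power_mono) (use assms in auto)
  ultimately show ?thesis by (simp add: abs_mult power_abs mult.commute mult_left_mono)
qed

lemma prod_le_P:
  fixes x y P :: real
  assumes "x^2 \<le> P" "y^2 \<le> P"
  shows "\<bar>x\<bar> * \<bar>y\<bar> \<le> P"
proof -
  have "(\<bar>x\<bar> - \<bar>y\<bar>)^2 = x^2 + y^2 - 2*(\<bar>x\<bar>*\<bar>y\<bar>)"
    by (simp add: power2_eq_square algebra_simps)
  moreover have "0 \<le> (\<bar>x\<bar> - \<bar>y\<bar>)^2" by simp
  ultimately show ?thesis using assms by linarith
qed
lemma neg_term:
  fixes a b c B \<sigma> nn P :: real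
  assumes ab: "\<bar>a\<bar> \<le> B" and bb: "\<bar>b\<bar> \<le> B" and d: "d \<ge> 1" and s: "\<sigma> > 0" and nn: "nn \<ge> 0"
    and Pa: "(min a 0)^2 \<le> P" and Pb: "(min b 0)^2 \<le> P" and Pc: "(min c 0)^2 \<le> P"
  shows "2 * min b 0 * (\<sigma> * (a^d - b^d) - nn * (b - c)) \<le> 2 * (2*\<sigma>*B^(d-1) + nn) * P"
proof -
  have B0: "B \<ge> 0" using ab by linarith
  have A: "min b 0 * a^d \<le> B^(d-1) * (\<bar>min b 0\<bar> * \<bar>min a 0\<bar>)"
  proof (cases "a \<ge> 0")
    case True
    then have "a^d \<ge> 0" by simp
    then have "min b 0 * a^d \<le> 0" by (simp add: mult_nonpos_nonneg)
    moreover have "0 \<le> B^(d-1) * (\<bar>min b 0\<bar> * \<bar>min a 0\<bar>)" using B0 by (intro mult_nonneg_nonneg) auto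
    ultimately show ?thesis by linarith
  next
    case False
    have "min b 0 * a^d \<le> \<bar>min b 0\<bar> * \<bar>a^d\<bar>" by (metis abs_ge_self abs_mult)
    also have "\<dots> \<le> \<bar>min b 0\<bar> * (B^(d-1) * \<bar>a\<bar>)"
      by (rule mult_left_mono[OF pow_abs_bound[OF ab d]]) simp
    also have "\<dots> = B^(d-1) * (\<bar>min b 0\<bar> * \<bar>min a 0\<bar>)"
    proof -
      have eq: "\<bar>min a 0\<bar> = \<bar>a\<bar>" using False by simp
      show ?thesis by (simp only: eq mult_ac)
    qed
    finally show ?thesis .
  qed
  have Bt: "- (min b 0 * b^d) \<le> B^(d-1) * (min b 0)^2"
  proof (cases "b \<ge> 0")
    case True then show ?thesis using B0 by simp
  next
    case False
    have "- (min b 0 * b^d) \<le> \<bar>b\<bar> * \<bar>b^d\<bar>" using False by (simp add: min_def abs_mult[symmetric])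
    also have "\<dots> \<le> \<bar>b\<bar> * (B^(d-1) * \<bar>b\<bar>)"
      by (rule mult_left_mono[OF pow_abs_bound[OF bb d]]) simp
    finally show ?thesis using False by (simp add: min_def power2_eq_square algebra_simps)
  qed
  have Ct: "- (min b 0 * b) \<le> 0"
    by (simp add: min_def mult_le_0_iff)
  have Dt: "min b 0 * c \<le> \<bar>min b 0\<bar> * \<bar>min c 0\<bar>"
    by (cases "c \<ge> 0") (auto simp: min_def mult_le_0_iff abs_mult[symmetric])
  have p1: "\<bar>min b 0\<bar> * \<bar>min a 0\<bar> \<le> P" by (rule prod_le_P[OF Pb Pa])
  have p2: "\<bar>min b 0\<bar> * \<bar>min c 0\<bar> \<le> P" by (rule prod_le_P[OF Pb Pc])
  have Bp: "B^(d-1) \<ge> 0" using B0 by simp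
  have e1: "B^(d-1) * (\<bar>min b 0\<bar> * \<bar>min a 0\<bar>) \<le> B^(d-1) * P" by (rule mult_left_mono[OF p1 Bp])
  have e2: "B^(d-1) * (min b 0)^2 \<le> B^(d-1) * P" by (rule mult_left_mono[OF Pb Bp])
  have e3: "nn * (\<bar>min b 0\<bar> * \<bar>min c 0\<bar>) \<le> nn * P" by (rule mult_left_mono[OF p2 nn])
  have "2 * min b 0 * (\<sigma> * (a^d - b^d) - nn * (b - c))
      = 2 * \<sigma> * (min b 0 * a^d) + 2 * \<sigma> * (- (min b 0 * b^d)) + 2 * nn * (- (min b 0 * b)) + 2 * nn * (min b 0 * c)"
    by (simp add: algebra_simps)
  also have "\<dots> \<le> 2 * \<sigma> * (B^(d-1) * P) + 2 * \<sigma> * (B^(d-1) * P) + 2 * nn * 0 + 2 * nn * P"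
  proof -
    have i1: "min b 0 * a^d \<le> B^(d-1) * P" using A e1 by linarith
    have i2: "- (min b 0 * b^d) \<le> B^(d-1) * P" using Bt e2 by linarith
    have i4: "min b 0 * c \<le> P" using Dt p2 by linarith
    have "2 * \<sigma> * (min b 0 * a^d) \<le> 2 * \<sigma> * (B^(d-1) * P)"
      using i1 s by (intro mult_left_mono) auto
    moreover have "2 * \<sigma> * (- (min b 0 * b^d)) \<le> 2 * \<sigma> * (B^(d-1) * P)"
      using i2 s by (intro mult_left_mono) auto
    moreover have "2 * nn * (- (min b 0 * b)) \<le> 2 * nn * 0"
      using Ct nn by (intro mult_left_mono) auto
    moreover have "2 * nn * (min b 0 * c) \<le> 2 * nn * P"
      using i4 nn by (intro mult_left_mono) auto
    ultimately show ?thesis by linarith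
  qed
  also have "\<dots> = 2 * (2*\<sigma>*B^(d-1) + nn) * P" by (simp add: algebra_simps)
  finally show ?thesis .
qed

lemma l1_term:
  fixes v0 v1 v2 a0 a1 A \<sigma> nn \<epsilon> :: real
  assumes a0: "a0 \<ge> 0" and a1: "a1 \<ge> 0" "a1 \<le> A" and s: "\<sigma> > 0" and nn: "nn \<ge> 0" and e: "\<epsilon> > 0"
  shows "(v1 / sqrt (v1^2 + \<epsilon>^2)) * (\<sigma> * (a0 * v0 - a1 * v1) - nn * (v1 - v2))
         \<le> \<sigma> * a0 * \<bar>v0\<bar> - \<sigma> * a1 * \<bar>v1\<bar> + nn * \<bar>v2\<bar> - nn * \<bar>v1\<bar> + \<epsilon> * (\<sigma> * A + nn)"
proof -
  define \<phi> where "\<phi> = sqrt (v1^2 + \<epsilon>^2)"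
  have \<phi>pos: "\<phi> > 0" unfolding \<phi>_def using e by (simp add: add_nonneg_pos)
  have v1le: "\<bar>v1\<bar> \<le> \<phi>" unfolding \<phi>_def
    by (metis real_sqrt_abs real_sqrt_le_mono le_add_same_cancel1 zero_le_power2)
  have \<phi>le: "\<phi> \<le> \<bar>v1\<bar> + \<epsilon>"
  proof -
    have "v1^2 + \<epsilon>^2 \<le> (\<bar>v1\<bar> + \<epsilon>)^2" using e by (simp add: power2_eq_square algebra_simps)
    then have "\<phi> \<le> sqrt ((\<bar>v1\<bar> + \<epsilon>)^2)" unfolding \<phi>_def by (rule real_sqrt_le_mono)
    then show ?thesis using e by simp
  qed
  define sg where "sg = v1 / \<phi>"
  have sg1: "\<bar>sg\<bar> \<le> 1" unfolding sg_def using \<phi>pos v1le by (simp add: abs_divide divide_le_eq)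
  have sgv: "sg * v1 \<ge> \<bar>v1\<bar> - \<epsilon>"
  proof -
    have "(\<bar>v1\<bar> - \<epsilon>) * \<phi> \<le> v1^2"
    proof (cases "\<bar>v1\<bar> \<ge> \<epsilon>")
      case True
      then have "(\<bar>v1\<bar> - \<epsilon>) * \<phi> \<le> (\<bar>v1\<bar> - \<epsilon>) * (\<bar>v1\<bar> + \<epsilon>)"
        using \<phi>le by (intro mult_left_mono) auto
      also have "\<dots> = v1^2 - \<epsilon>^2" by (simp add: power2_eq_square algebra_simps)
      finally have "(\<bar>v1\<bar> - \<epsilon>) * \<phi> \<le> v1^2 - \<epsilon>^2" .
      moreover have "\<epsilon>^2 \<ge> 0" by simp
      ultimately show ?thesis by linarith
    next
      case False
      then have "(\<bar>v1\<bar> - \<epsilon>) * \<phi> \<le> 0" using \<phi>pos by (intro mult_nonpos_nonneg) auto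
      then show ?thesis by (meson order_trans zero_le_power2)
    qed
    then have "\<bar>v1\<bar> - \<epsilon> \<le> v1^2 / \<phi>" using \<phi>pos by (simp add: le_divide_eq)
    then show ?thesis unfolding sg_def by (simp add: power2_eq_square)
  qed
  have sgabs: "\<And>w. sg * w \<le> \<bar>w\<bar>"
  proof -
    fix w
    have "sg * w \<le> \<bar>sg\<bar> * \<bar>w\<bar>" by (metis abs_ge_self abs_mult)
    also have "\<dots> \<le> 1 * \<bar>w\<bar>" using sg1 by (intro mult_right_mono) auto
    finally show "sg * w \<le> \<bar>w\<bar>" by simp
  qed
  have t1: "\<sigma> * a0 * (sg * v0) \<le> \<sigma> * a0 * \<bar>v0\<bar>"
    using s a0 sgabs[of v0] by (intro mult_left_mono) auto
  have t2: "\<sigma> * a1 * (\<bar>v1\<bar> - \<epsilon>) \<le> \<sigma> * a1 * (sg * v1)"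
    using s a1 sgv by (intro mult_left_mono) auto
  have t2': "\<sigma> * a1 * \<epsilon> \<le> \<sigma> * A * \<epsilon>"
    using s a1 e by (intro mult_right_mono mult_left_mono) auto
  have t3: "nn * (\<bar>v1\<bar> - \<epsilon>) \<le> nn * (sg * v1)"
    using nn sgv by (intro mult_left_mono) auto
  have t4: "nn * (sg * v2) \<le> nn * \<bar>v2\<bar>"
    using nn sgabs[of v2] by (intro mult_left_mono) auto
  have "sg * (\<sigma> * (a0 * v0 - a1 * v1) - nn * (v1 - v2))
      = \<sigma> * a0 * (sg * v0) - \<sigma> * a1 * (sg * v1) - nn * (sg * v1) + nn * (sg * v2)"
    by (simp add: algebra_simps)
  also have "\<dots> \<le> \<sigma> * a0 * \<bar>v0\<bar> - \<sigma> * a1 * \<bar>v1\<bar> + nn * \<bar>v2\<bar> - nn * \<bar>v1\<bar> + \<epsilon> * (\<sigma> * A + nn)"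
    using t1 t2 t2' t3 t4 by (simp add: algebra_simps)
  finally show ?thesis unfolding sg_def \<phi>_def .
qed

lemma DERIV_sqrt_eps:
  fixes \<epsilon> :: real assumes "\<epsilon> > 0"
  shows "((\<lambda>y. sqrt (y^2 + \<epsilon>^2)) has_real_derivative y / sqrt (y^2 + \<epsilon>^2)) (at y)"
proof -
  have pos: "y^2 + \<epsilon>^2 > 0" using assms by (simp add: add_nonneg_pos)
  show ?thesis
    using pos by (auto intro!: derivative_eq_intros simp: field_simps)
qed

lemma deriv_cont:
  fixes F F' :: "real \<Rightarrow> real"
  assumes der: "\<And>s. s \<ge> 0 \<Longrightarrow> (F has_real_derivative F' s) (at s within {0..})"
  shows "continuous_on {0..} F"
  unfolding continuous_on_eq_continuous_within
  using der has_field_derivative_imp_has_derivative has_derivative_continuous by fastforce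

lemma inU_mono: "inU C w \<Longrightarrow> m \<le> n \<Longrightarrow> n \<le> C \<Longrightarrow> w n \<le> w m"
proof (induction n)
  case 0 then show ?case by simp
next
  case (Suc n)
  show ?case
  proof (cases "m = Suc n")
    case False
    then have "m \<le> n" using Suc.prems by simp
    then have "w n \<le> w m" using Suc by simp
    moreover have "w (Suc n) \<le> w n" using Suc.prems unfolding inU_def by auto
    ultimately show ?thesis by simp
  qed simp
qed

lemma inU_bounds: "inU C w \<Longrightarrow> n \<le> C \<Longrightarrow> 0 \<le> w n \<and> w n \<le> 1"
proof -
  assume a: "inU C w" "n \<le> C"
  have "w C \<le> w n" by (rule inU_mono[OF a(1) a(2)]) simp
  moreover have "w n \<le> w 0" by (rule inU_mono[OF a(1)]) (use a in auto)
  ultimately show ?thesis using a(1) unfolding inU_def by auto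
qed

context
  fixes C d :: nat and \<sigma> :: real and \<pi> u :: "nat \<Rightarrow> real" and X :: "real \<Rightarrow> nat \<Rightarrow> real"
  assumes C1: "C \<ge> 1" and d1: "d \<ge> 1" and sig: "\<sigma> > 0" and fp: "is_fixed_point C d \<sigma> \<pi>"
    and uU: "inU C u" and sol: "is_solution C d \<sigma> u X"
begin

lemma der: "n \<le> C \<Longrightarrow> s \<ge> 0 \<Longrightarrow> ((\<lambda>s. X s n) has_real_derivative drift C d \<sigma> (X s) n) (at s within {0..})"
  using sol unfolding is_solution_def by blast

lemma Xinit: "n \<le> C \<Longrightarrow> X 0 n = u n"
  using sol unfolding is_solution_def by blast

lemma cont: "n \<le> C \<Longrightarrow> continuous_on {0..} (\<lambda>s. X s n)"
  by (rule deriv_cont[OF der])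

lemma X0: assumes "s \<ge> 0" shows "X s 0 = 1"
proof -
  have d0: "\<And>t. t \<ge> 0 \<Longrightarrow> ((\<lambda>s. X s 0) has_real_derivative 0) (at t within {0..})"
    using der[of 0] by (simp add: drift_def)
  have "X s 0 \<le> X 0 0" by (rule nonincr_0T[OF d0 _ assms]) auto
  moreover have "(\<lambda>s. - X s 0) s \<le> (\<lambda>s. - X s 0) 0"
    by (rule nonincr_0T[where F'="\<lambda>_. 0"]) (use DERIV_minus[OF d0] assms in auto)
  ultimately have "X s 0 = X 0 0" by simp
  also have "\<dots> = 1" using Xinit[of 0] uU unfolding inU_def by simp
  finally show ?thesis .
qed

lemma bound: assumes "T \<ge> 0" shows "\<exists>B\<ge>1. \<forall>s\<in>{0..T}. \<forall>k. \<bar>comp C (X s) k\<bar> \<le> B"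
proof -
  define g where "g s = (\<Sum>n\<le>C. \<bar>X s n\<bar>)" for s
  have cn: "\<And>n. n \<le> C \<Longrightarrow> continuous_on {0..T} (\<lambda>s. X s n)"
    by (rule continuous_on_subset[OF cont]) auto
  have "continuous_on {0..T} g" unfolding g_def
    by (intro continuous_on_sum continuous_intros cn) auto
  then obtain s0 where s0: "s0 \<in> {0..T}" "\<And>s. s \<in> {0..T} \<Longrightarrow> g s \<le> g s0"
    using continuous_attains_sup[of "{0..T}" g] assms by auto
  show ?thesis
  proof (intro exI[of _ "max 1 (g s0)"] conjI ballI allI)
    fix s k assume s: "s \<in> {0..T}"
    show "\<bar>comp C (X s) k\<bar> \<le> max 1 (g s0)"
    proof (cases "k \<le> C")
      case True
      have "\<bar>X s k\<bar> \<le> g s" unfolding g_def by (rule member_le_sum) (use True in auto)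
      then show ?thesis using s0(2)[OF s] True by (simp add: comp_def)
    qed (simp add: comp_def)
  qed simp
qed

lemma comp_le_Phi: "(min (comp C y k) 0)^2 \<le> (\<Sum>n\<le>C. (min (y n) 0)^2)"
proof (cases "k \<le> C")
  case True
  then show ?thesis unfolding comp_def by (simp, intro member_le_sum) auto
next
  case False
  then show ?thesis unfolding comp_def by (simp add: sum_nonneg)
qed

lemma nonneg: assumes T: "T \<ge> 0" and n: "n \<le> C" shows "X T n \<ge> 0"
proof -
  obtain B where B1: "B \<ge> 1" and B: "\<And>s k. s \<in> {0..T} \<Longrightarrow> \<bar>comp C (X s) k\<bar> \<le> B"
    using bound[OF T] by blast
  define \<Phi> where "\<Phi> s = (\<Sum>n\<le>C. (min (X s n) 0)^2)" for s
  define \<Phi>' where "\<Phi>' s = (\<Sum>n\<le>C. 2 * min (X s n) 0 * drift C d \<sigma> (X s) n)" for s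
  define K where "K = 2 * (2*\<sigma>*B^(d-1) + real C)"
  have K0: "K \<ge> 0" unfolding K_def using sig B1 by simp
  have Phi0: "\<Phi> s \<ge> 0" for s unfolding \<Phi>_def by (simp add: sum_nonneg)
  have dPhi: "(\<Phi> has_real_derivative \<Phi>' s) (at s within {0..})" if "s \<ge> 0" for s
    unfolding \<Phi>_def \<Phi>'_def
    by (intro DERIV_sum DERIV_chain2[OF DERIV_minsq] der) (use that in auto)
  have tm: "2 * min (X s m) 0 * drift C d \<sigma> (X s) m \<le> K * \<Phi> s"
    if s: "s \<in> {0..T}" and m: "m \<le> C" for s m
  proof (cases "m = 0")
    case True
    then show ?thesis using K0 Phi0[of s] by (simp add: drift_def)
  next
    case False
    have Xm: "X s m = comp C (X s) m" using m by (simp add: comp_def)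
    have "2 * min (X s m) 0 * drift C d \<sigma> (X s) m
        = 2 * min (comp C (X s) m) 0 * (\<sigma> * (comp C (X s) (m-1) ^ d - comp C (X s) m ^ d)
             - real m * (comp C (X s) m - comp C (X s) (m+1)))"
      using False by (simp add: drift_def Xm)
    also have "\<dots> \<le> 2 * (2*\<sigma>*B^(d-1) + real m) * \<Phi> s"
      by (rule neg_term[OF B[OF s] B[OF s] d1 sig]) (auto simp: \<Phi>_def comp_le_Phi)
    also have "\<dots> \<le> K * \<Phi> s" unfolding K_def using m Phi0[of s]
      by (intro mult_right_mono) auto
    finally show ?thesis .
  qed
  have dle: "\<Phi>' s \<le> real (Suc C) * K * \<Phi> s" if s: "s \<in> {0..T}" for s
  proof -
    have "\<Phi>' s \<le> (\<Sum>n\<le>C. K * \<Phi> s)" unfolding \<Phi>'_def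
      by (rule sum_mono) (use tm s in auto)
    then show ?thesis by simp
  qed
  define L where "L = real (Suc C) * K"
  define F where "F s = exp (- L * s) * \<Phi> s" for s
  have dF: "(F has_real_derivative (- L * exp (- L * s) * \<Phi> s + exp (- L * s) * \<Phi>' s)) (at s within {0..})"
    if "s \<ge> 0" for s
    unfolding F_def using dPhi[OF that]
    by (auto intro!: derivative_eq_intros simp: algebra_simps)
  have "F T \<le> F 0"
  proof (rule nonincr_0T[OF dF _ T])
    fix s assume "0 \<le> s" "s \<le> T"
    then have "\<Phi>' s \<le> L * \<Phi> s" using dle L_def by auto
    then have "exp (- L * s) * \<Phi>' s \<le> exp (- L * s) * (L * \<Phi> s)" by (intro mult_left_mono) auto
    then show "- L * exp (- L * s) * \<Phi> s + exp (- L * s) * \<Phi>' s \<le> 0" by (simp add: algebra_simps)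
  qed simp
  moreover have "\<Phi> 0 = 0" unfolding \<Phi>_def
    using Xinit inU_bounds[OF uU] by (intro sum.neutral) auto
  ultimately have "exp (- L * T) * \<Phi> T \<le> 0" unfolding F_def by simp
  then have "\<Phi> T \<le> 0" by (simp add: mult_le_0_iff)
  moreover have "(min (X T n) 0)^2 \<le> \<Phi> T" unfolding \<Phi>_def by (rule member_le_sum) (use n in auto)
  ultimately have "(min (X T n) 0)^2 \<le> 0" by linarith
  then show ?thesis by (simp add: min_def split: if_splits)
qed

lemma piU: "inU C \<pi>" using fp unfolding is_fixed_point_def by simp

lemma pi_fp: "1 \<le> m \<Longrightarrow> m \<le> C \<Longrightarrow>
   \<sigma> * (comp C \<pi> (m - 1) ^ d - comp C \<pi> m ^ d) = real m * (comp C \<pi> m - comp C \<pi> (m + 1))"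
  using fp unfolding is_fixed_point_def by blast

lemma drift_eq:
  assumes s: "s \<ge> 0" and n: "n < C"
  defines "v \<equiv> \<lambda>k. comp C (X s) k - comp C \<pi> k"
    and "a \<equiv> \<lambda>k. (\<Sum>i<d. comp C \<pi> k ^ (d - Suc i) * comp C (X s) k ^ i)"
  shows "drift C d \<sigma> (X s) (Suc n) = \<sigma> * (a n * v n - a (Suc n) * v (Suc n)) - real (Suc n) * (v (Suc n) - v (Suc (Suc n)))"
proof -
  have f: "\<And>k. comp C (X s) k ^ d - comp C \<pi> k ^ d = a k * v k"
    unfolding a_def v_def by (simp add: power_diff_sumr2 mult.commute)
  have p: "\<sigma> * (comp C \<pi> n ^ d - comp C \<pi> (Suc n) ^ d) = real (Suc n) * (comp C \<pi> (Suc n) - comp C \<pi> (Suc (Suc n)))"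
    using pi_fp[of "Suc n"] n by simp
  have "drift C d \<sigma> (X s) (Suc n) = \<sigma> * (comp C (X s) n ^ d - comp C (X s) (Suc n) ^ d)
        - real (Suc n) * (comp C (X s) (Suc n) - comp C (X s) (Suc (Suc n)))"
    by (simp add: drift_def)
  also have "\<dots> = \<sigma> * ((comp C (X s) n ^ d - comp C \<pi> n ^ d) - (comp C (X s) (Suc n) ^ d - comp C \<pi> (Suc n) ^ d))
        - real (Suc n) * (v (Suc n) - v (Suc (Suc n)))
        + (\<sigma> * (comp C \<pi> n ^ d - comp C \<pi> (Suc n) ^ d) - real (Suc n) * (comp C \<pi> (Suc n) - comp C \<pi> (Suc (Suc n))))"
    unfolding v_def by (simp add: algebra_simps)
  also have "\<dots> = \<sigma> * (a n * v n - a (Suc n) * v (Suc n)) - real (Suc n) * (v (Suc n) - v (Suc (Suc n)))"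
    using p by (simp only: f)
  finally show ?thesis .
qed

lemma l1_decay: assumes T: "T \<ge> 0"
  shows "(\<Sum>n<C. \<bar>X T (Suc n) - \<pi> (Suc n)\<bar>) \<le> exp (- T) * (\<Sum>n<C. \<bar>u (Suc n) - \<pi> (Suc n)\<bar>)"
proof -
  obtain B where B1: "B \<ge> 1" and B: "\<And>s k. s \<in> {0..T} \<Longrightarrow> \<bar>comp C (X s) k\<bar> \<le> B"
    using bound[OF T] by blast
  define A where "A = real d * B^(d-1)"
  define v where "v s k = comp C (X s) k - comp C \<pi> k" for s k
  define a where "a s k = (\<Sum>i<d. comp C \<pi> k ^ (d - Suc i) * comp C (X s) k ^ i)" for s k
  define S where "S s = (\<Sum>n<C. \<bar>v s (Suc n)\<bar>)" for s
  have cx0: "0 \<le> comp C (X s) k" if "s \<ge> 0" for s k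
    using nonneg[OF that] by (simp add: comp_def)
  have cxB: "comp C (X s) k \<le> B" if "s \<in> {0..T}" for s k
    using B[OF that, of k] by simp
  have cp0: "0 \<le> comp C \<pi> k" and cp1: "comp C \<pi> k \<le> 1" for k
    using inU_bounds[OF piU, of k] by (auto simp: comp_def)
  have a_nn: "0 \<le> a s k" if "s \<ge> 0" for s k
    unfolding a_def using cx0[OF that] cp0 by (intro sum_nonneg mult_nonneg_nonneg zero_le_power) auto
  have a_le: "a s k \<le> A" if s: "s \<in> {0..T}" for s k
  proof -
    have "a s k \<le> of_nat (card {..<d}) * B^(d-1)" unfolding a_def
    proof (rule sum_bounded_above)
      fix i assume i: "i \<in> {..<d}"
      have "comp C \<pi> k ^ (d - Suc i) * comp C (X s) k ^ i \<le> B ^ (d - Suc i) * B ^ i"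
        using cp0 cp1 cx0 cxB[OF s] s B1
        by (intro mult_mono power_mono) (auto simp: order_trans[OF cp1])
      also have "\<dots> = B^(d-1)" using i by (simp add: power_add[symmetric])
      finally show "comp C \<pi> k ^ (d - Suc i) * comp C (X s) k ^ i \<le> B^(d-1)" .
    qed
    then show ?thesis unfolding A_def by simp
  qed
  have A0: "A \<ge> 0" unfolding A_def using B1 by simp
  have v0: "v s 0 = 0" if "s \<ge> 0" for s
    using X0[OF that] piU unfolding v_def comp_def inU_def by simp
  have vC: "v s (Suc C) = 0" for s unfolding v_def comp_def by simp
  have dv: "((\<lambda>s. v s (Suc n)) has_real_derivative drift C d \<sigma> (X s) (Suc n)) (at s within {0..})"
    if n: "n < C" and s: "s \<ge> 0" for n s
  proof -
    have eq: "(\<lambda>s. v s (Suc n)) = (\<lambda>s. X s (Suc n) - \<pi> (Suc n))" using n by (auto simp: v_def comp_def)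
    show ?thesis unfolding eq using der[of "Suc n" s] n s by (auto intro!: derivative_eq_intros)
  qed
  have de: "drift C d \<sigma> (X s) (Suc n) = \<sigma> * (a s n * v s n - a s (Suc n) * v s (Suc n)) - real (Suc n) * (v s (Suc n) - v s (Suc (Suc n)))"
    if "s \<ge> 0" "n < C" for s n
    unfolding a_def v_def by (rule drift_eq[OF that])
  define M where "M = real C + real C * (\<sigma> * A + real C)"
  have M0: "M \<ge> 0" unfolding M_def using A0 sig by simp
  have key: "S T \<le> exp (- T) * S 0 + \<epsilon> * (M + real C)" if e: "\<epsilon> > 0" for \<epsilon>
  proof -
    define V where "V s = (\<Sum>n<C. sqrt ((v s (Suc n))^2 + \<epsilon>^2))" for s
    define V' where "V' s = (\<Sum>n<C. (v s (Suc n) / sqrt ((v s (Suc n))^2 + \<epsilon>^2)) * drift C d \<sigma> (X s) (Suc n))" for s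
    have dV: "(V has_real_derivative V' s) (at s within {0..})" if "s \<ge> 0" for s
      unfolding V_def V'_def
      by (intro DERIV_sum DERIV_chain2[OF DERIV_sqrt_eps[OF e]] dv) (use that in auto)
    have sqle: "sqrt (x^2 + \<epsilon>^2) \<le> \<bar>x\<bar> + \<epsilon>" for x
    proof -
      have "x^2 + \<epsilon>^2 \<le> (\<bar>x\<bar> + \<epsilon>)^2" using e by (simp add: power2_eq_square algebra_simps)
      then have "sqrt (x^2 + \<epsilon>^2) \<le> sqrt ((\<bar>x\<bar> + \<epsilon>)^2)" by (rule real_sqrt_le_mono)
      then show ?thesis using e by simp
    qed
    have sqge: "\<bar>x\<bar> \<le> sqrt (x^2 + \<epsilon>^2)" for x
      by (metis real_sqrt_abs real_sqrt_le_mono le_add_same_cancel1 zero_le_power2)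
    have VleS: "V s \<le> S s + real C * \<epsilon>" for s
    proof -
      have "V s \<le> (\<Sum>n<C. \<bar>v s (Suc n)\<bar> + \<epsilon>)" unfolding V_def by (rule sum_mono) (rule sqle)
      then show ?thesis by (simp add: S_def sum.distrib)
    qed
    have SleV: "S s \<le> V s" for s unfolding S_def V_def by (rule sum_mono) (rule sqge)
    have V'le: "V' s \<le> - S s + real C * \<epsilon> * (\<sigma> * A + real C)" if s: "s \<in> {0..T}" for s
    proof -
      have s0: "s \<ge> 0" using s by simp
      define f where "f k = \<sigma> * a s k * \<bar>v s k\<bar>" for k
      define g where "g k = real k * \<bar>v s (Suc k)\<bar>" for k
      have "V' s \<le> (\<Sum>n<C. (f n - f (Suc n)) + (g (Suc n) - g n) - \<bar>v s (Suc n)\<bar> + \<epsilon> * (\<sigma> * A + real (Suc n)))"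
        unfolding V'_def
      proof (rule sum_mono)
        fix n assume n: "n \<in> {..<C}"
        have "(v s (Suc n) / sqrt ((v s (Suc n))^2 + \<epsilon>^2)) * drift C d \<sigma> (X s) (Suc n)
            = (v s (Suc n) / sqrt ((v s (Suc n))^2 + \<epsilon>^2)) * (\<sigma> * (a s n * v s n - a s (Suc n) * v s (Suc n)) - real (Suc n) * (v s (Suc n) - v s (Suc (Suc n))))"
          using de[OF s0, of n] n by simp
        also have "\<dots> \<le> \<sigma> * a s n * \<bar>v s n\<bar> - \<sigma> * a s (Suc n) * \<bar>v s (Suc n)\<bar> + real (Suc n) * \<bar>v s (Suc (Suc n))\<bar> - real (Suc n) * \<bar>v s (Suc n)\<bar> + \<epsilon> * (\<sigma> * A + real (Suc n))"
          by (rule l1_term[OF a_nn[OF s0] a_nn[OF s0] a_le[OF s] sig _ e]) simp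
        also have "\<dots> = (f n - f (Suc n)) + (g (Suc n) - g n) - \<bar>v s (Suc n)\<bar> + \<epsilon> * (\<sigma> * A + real (Suc n))"
          unfolding f_def g_def by (simp add: algebra_simps)
        finally show "(v s (Suc n) / sqrt ((v s (Suc n))^2 + \<epsilon>^2)) * drift C d \<sigma> (X s) (Suc n) \<le> \<dots>" .
      qed
      also have "\<dots> = (\<Sum>n<C. f n - f (Suc n)) + (\<Sum>n<C. g (Suc n) - g n) - S s + (\<Sum>n<C. \<epsilon> * (\<sigma> * A + real (Suc n)))"
        unfolding S_def by (simp add: sum.distrib sum_subtractf)
      also have "\<dots> = (f 0 - f C) + (g C - g 0) - S s + (\<Sum>n<C. \<epsilon> * (\<sigma> * A + real (Suc n)))"
        by (simp only: sum_lessThan_telescope sum_lessThan_telescope')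
      also have "\<dots> \<le> 0 + 0 - S s + (\<Sum>n<C. \<epsilon> * (\<sigma> * A + real C))"
      proof -
        have "f 0 = 0" unfolding f_def using v0[OF s0] by simp
        moreover have "f C \<ge> 0" unfolding f_def using sig a_nn[OF s0, of C] by simp
        moreover have "g C = 0" unfolding g_def using vC by simp
        moreover have "g 0 = 0" unfolding g_def by simp
        moreover have "(\<Sum>n<C. \<epsilon> * (\<sigma> * A + real (Suc n))) \<le> (\<Sum>n<C. \<epsilon> * (\<sigma> * A + real C))"
          using e by (intro sum_mono mult_left_mono) auto
        ultimately show ?thesis by linarith
      qed
      also have "\<dots> = - S s + real C * \<epsilon> * (\<sigma> * A + real C)" by simp
      finally show ?thesis .
    qed
    define F where "F s = exp s * (V s - \<epsilon> * M)" for s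
    have dF: "(F has_real_derivative (exp s * (V s - \<epsilon> * M) + exp s * V' s)) (at s within {0..})"
      if "s \<ge> 0" for s
      unfolding F_def using dV[OF that] by (auto intro!: derivative_eq_intros simp: algebra_simps)
    have "F T \<le> F 0"
    proof (rule nonincr_0T[OF dF _ T])
      fix s assume "0 \<le> s" "s \<le> T"
      then have "V' s + (V s - \<epsilon> * M) \<le> 0"
        using V'le[of s] VleS[of s] unfolding M_def by (simp add: algebra_simps)
      then have "exp s * (V' s + (V s - \<epsilon> * M)) \<le> 0" by (simp add: mult_nonneg_nonpos)
      then show "exp s * (V s - \<epsilon> * M) + exp s * V' s \<le> 0" by (simp add: algebra_simps)
    qed simp
    then have "exp T * (V T - \<epsilon> * M) \<le> V 0 - \<epsilon> * M" unfolding F_def by simp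
    then have "V T - \<epsilon> * M \<le> exp (- T) * (V 0 - \<epsilon> * M)"
      by (simp add: exp_minus field_simps)
    also have "\<dots> \<le> exp (- T) * (S 0 + real C * \<epsilon>)"
    proof (rule mult_left_mono)
      have "\<epsilon> * M \<ge> 0" using e M0 by simp
      then show "V 0 - \<epsilon> * M \<le> S 0 + real C * \<epsilon>" using VleS[of 0] by linarith
    qed simp
    also have "\<dots> \<le> exp (- T) * S 0 + real C * \<epsilon>"
    proof -
      have "exp (- T) * (real C * \<epsilon>) \<le> 1 * (real C * \<epsilon>)" using T e by (intro mult_right_mono) auto
      then show ?thesis by (simp add: algebra_simps)
    qed
    finally show ?thesis using SleV[of T] by (simp add: algebra_simps)
  qed
  have "S T \<le> exp (- T) * S 0"
  proof (rule field_le_epsilon)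
    fix e :: real assume e: "e > 0"
    define \<epsilon> where "\<epsilon> = e / (M + real C + 1)"
    have ep: "\<epsilon> > 0" unfolding \<epsilon>_def using e M0 by simp
    have "\<epsilon> * (M + real C) \<le> e" unfolding \<epsilon>_def using e M0 by (simp add: field_simps)
    then show "S T \<le> exp (- T) * S 0 + e" using key[OF ep] by linarith
  qed
  moreover have "S T = (\<Sum>n<C. \<bar>X T (Suc n) - \<pi> (Suc n)\<bar>)"
    unfolding S_def v_def comp_def by (intro sum.cong) auto
  moreover have "S 0 = (\<Sum>n<C. \<bar>u (Suc n) - \<pi> (Suc n)\<bar>)"
    unfolding S_def v_def comp_def using Xinit by (intro sum.cong) auto
  ultimately show ?thesis by simp
qed

end

theorem mainTheorem4:
  fixes C d :: nat and \<sigma> :: real and \<pi> :: "nat \<Rightarrow> real"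
  assumes "C \<ge> 1" and "d \<ge> 1" and "\<sigma> > 0"
    and "is_fixed_point C d \<sigma> \<pi>"
  shows "\<exists>\<delta>1 D3. \<delta>1 > 0 \<and>
           (\<forall>u X. inU C u \<longrightarrow> is_solution C d \<sigma> u X \<longrightarrow>
              (\<forall>t\<ge>0. dist2 C (X t) \<pi> \<le> D3 * exp (- \<delta>1 * t) * dist2 C u \<pi>))"
proof -
  have main: "dist2 C (X t) \<pi> \<le> sqrt (real (Suc C)) * exp (- t) * dist2 C u \<pi>"
    if uU: "inU C u" and sol: "is_solution C d \<sigma> u X" and t: "t \<ge> 0" for u X and t :: real
  proof -
  note ctx = assms uU sol
  have pi0: "\<pi> 0 = 1" using assms(4) unfolding is_fixed_point_def inU_def by simp
  have "dist2 C (X t) \<pi> = L2_set (\<lambda>n. X t n - \<pi> n) {..C}"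
    unfolding dist2_def L2_set_def by simp
  also have "\<dots> \<le> (\<Sum>n\<le>C. \<bar>X t n - \<pi> n\<bar>)" by (rule L2_set_le_sum_abs)
  also have "\<dots> = (\<Sum>n<C. \<bar>X t (Suc n) - \<pi> (Suc n)\<bar>)"
    using X0[OF ctx t] pi0 by (simp add: sum.atMost_shift)
  also have "\<dots> \<le> exp (- t) * (\<Sum>n<C. \<bar>u (Suc n) - \<pi> (Suc n)\<bar>)"
    by (rule l1_decay[OF ctx t])
  also have "\<dots> \<le> exp (- t) * (\<Sum>n\<le>C. \<bar>u n - \<pi> n\<bar>)"
    by (intro mult_left_mono) (auto simp: sum.atMost_shift)
  also have "\<dots> \<le> exp (- t) * (L2_set (\<lambda>n. u n - \<pi> n) {..C} * sqrt (real (Suc C)))"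
  proof (rule mult_left_mono)
    have "(\<Sum>n\<le>C. \<bar>u n - \<pi> n\<bar>) = (\<Sum>n\<le>C. \<bar>u n - \<pi> n\<bar> * \<bar>1::real\<bar>)" by simp
    also have "\<dots> \<le> L2_set (\<lambda>n. u n - \<pi> n) {..C} * L2_set (\<lambda>n. 1::real) {..C}"
      by (rule L2_set_mult_ineq)
    also have "\<dots> = L2_set (\<lambda>n. u n - \<pi> n) {..C} * sqrt (real (Suc C))"
      by (simp add: L2_set_constant)
    finally show "(\<Sum>n\<le>C. \<bar>u n - \<pi> n\<bar>) \<le> L2_set (\<lambda>n. u n - \<pi> n) {..C} * sqrt (real (Suc C))" .
  qed simp
  also have "\<dots> = sqrt (real (Suc C)) * exp (- t) * dist2 C u \<pi>"
    unfolding dist2_def L2_set_def by simp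
  finally show ?thesis .
  qed
  show ?thesis
    by (rule exI[of _ 1], rule exI[of _ "sqrt (real (Suc C))"]) (auto simp del: of_nat_Suc intro: main)
qed

end
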